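(* For any $0<\delta\le 1/2$, $0<\epsilon\le 1$ and integer $\Delta\ge 3$, there exists a randomised algorithm that, given the number $n$ of nodes and access to a preference oracle for a bicoloured graph $\mathcal{G}$ without isolated nodes and with maximum degree at most $\Delta$, makes at most $25000\,\epsilon^{-2}(\Delta-1)^{3+4\Delta/\epsilon}\ln\delta^{-1}$ queries to the oracle and outputs, with probability at least $1-\delta$, an estimate $\hat m$ such that $\bigl|\hat m-|M|\bigr|\le\epsilon|M|$, where $M$ is a stable matching in $\mathcal{G}$.
   Context: A bicoloured graph is a simple undirected bipartite graph $\mathcal{G}=(R\cup B,E)$ with red nodes $R$ and blue nodes $B$ (every edge joins a red and a blue node); each node has a linear preference order on its neighbours. A matching is a set of edges no two sharing a node. An edge $\{u,v\}\in E\setminus M$ is unstable relative to a matching $M$ if (i) $u$ is unmatched or prefers $v$ to its partner in $M$, and (ii) $v$ is unmatched or prefers $u$ to its partner in $M$; $M$ is stable if there are no unstable edges. A preference oracle, queried with a node, returns the node's colour and its list of adjacent nodes in order of preference. The algorithm may sample nodes uniformly at random. *)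

theory Defs
  imports "HOL-Probability.Probability"
begin

text \<open>Bicoloured graphs on the node set {0..<n}. A node u is red iff red G u;
  pref G u is the list of neighbours of u, most preferred first.\<close>
record bigraph =
  red  :: "nat \<Rightarrow> bool"
  pref :: "nat \<Rightarrow> nat list"

definition edge :: "nat \<Rightarrow> bigraph \<Rightarrow> nat \<Rightarrow> nat \<Rightarrow> bool" where
  "edge n G u v \<longleftrightarrow> u < n \<and> v \<in> set (pref G u)"

definition valid_bigraph :: "nat \<Rightarrow> bigraph \<Rightarrow> bool" where
  "valid_bigraph n G \<longleftrightarrow>
     (\<forall>u<n. distinct (pref G u) \<and> set (pref G u) \<subseteq> {0..<n}) \<and>
     (\<forall>u<n. \<forall>v<n. v \<in> set (pref G u) \<longleftrightarrow> u \<in> set (pref G v)) \<and>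
     (\<forall>u<n. \<forall>v \<in> set (pref G u). red G u \<noteq> red G v)"

definition no_isolated :: "nat \<Rightarrow> bigraph \<Rightarrow> bool" where
  "no_isolated n G \<longleftrightarrow> (\<forall>u<n. pref G u \<noteq> [])"

definition max_degree_le :: "nat \<Rightarrow> bigraph \<Rightarrow> nat \<Rightarrow> bool" where
  "max_degree_le n G D \<longleftrightarrow> (\<forall>u<n. length (pref G u) \<le> D)"

definition prefers :: "bigraph \<Rightarrow> nat \<Rightarrow> nat \<Rightarrow> nat \<Rightarrow> bool" where
  "prefers G u v w \<longleftrightarrow> (\<exists>i j. i < j \<and> j < length (pref G u) \<and> pref G u ! i = v \<and> pref G u ! j = w)"

definition matching :: "nat \<Rightarrow> bigraph \<Rightarrow> nat set set \<Rightarrow> bool" where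
  "matching n G M \<longleftrightarrow>
     M \<subseteq> {{u, v} | u v. edge n G u v} \<and>
     (\<forall>e\<in>M. \<forall>e'\<in>M. e \<noteq> e' \<longrightarrow> e \<inter> e' = {})"

text \<open>Edge {u,v} not in M is unstable if each endpoint is unmatched or prefers
  the other endpoint to its partner (for an unmatched node the condition is vacuous).\<close>
definition unstable_edge :: "nat \<Rightarrow> bigraph \<Rightarrow> nat set set \<Rightarrow> nat \<Rightarrow> nat \<Rightarrow> bool" where
  "unstable_edge n G M u v \<longleftrightarrow> edge n G u v \<and> {u, v} \<notin> M \<and>
     (\<forall>w. {u, w} \<in> M \<longrightarrow> prefers G u v w) \<and>
     (\<forall>w. {v, w} \<in> M \<longrightarrow> prefers G v u w)"

definition stable_matching :: "nat \<Rightarrow> bigraph \<Rightarrow> nat set set \<Rightarrow> bool" where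
  "stable_matching n G M \<longleftrightarrow> matching n G M \<and> (\<nexists>u v. unstable_edge n G M u v)"

text \<open>Randomised query algorithms as (well-founded) decision trees:
  Flip = fair coin, Sample = uniformly random node of {0..<n},
  Query v = ask the preference-oracle about node v (answer: colour, preference list),
  Output = stop with an estimate.\<close>
datatype alg =
    Output real
  | Flip "bool \<Rightarrow> alg"
  | Sample "nat \<Rightarrow> alg"
  | Query nat "bool \<times> nat list \<Rightarrow> alg"

definition answer :: "bigraph \<Rightarrow> nat \<Rightarrow> bool \<times> nat list" where
  "answer G v = (red G v, pref G v)"

primrec run :: "nat \<Rightarrow> bigraph \<Rightarrow> alg \<Rightarrow> real pmf" where
  "run n G (Output r) = return_pmf r"
| "run n G (Flip f) = bind_pmf (bernoulli_pmf (1/2)) (\<lambda>b. run n G (f b))"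
| "run n G (Sample f) = bind_pmf (pmf_of_set {0..<n}) (\<lambda>v. run n G (f v))"
| "run n G (Query v f) = run n G (f (answer G v))"

primrec queries_le :: "nat \<Rightarrow> bigraph \<Rightarrow> alg \<Rightarrow> real \<Rightarrow> bool" where
  "queries_le n G (Output r) b = True"
| "queries_le n G (Flip f) b = (\<forall>c. queries_le n G (f c) b)"
| "queries_le n G (Sample f) b = (\<forall>v<n. queries_le n G (f v) b)"
| "queries_le n G (Query v f) b = (1 \<le> b \<and> queries_le n G (f (answer G v)) (b - 1))"

text \<open>The algorithm only queries nodes it knows: nodes it has sampled or that
  appeared in the answer of a previous query.\<close>
primrec legal :: "nat set \<Rightarrow> alg \<Rightarrow> bool" where
  "legal K (Output r) = True"
| "legal K (Flip f) = (\<forall>c. legal K (f c))"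
| "legal K (Sample f) = (\<forall>v. legal (insert v K) (f v))"
| "legal K (Query v f) = (v \<in> K \<and> (\<forall>a. legal (K \<union> set (snd a)) (f a)))"

end

theory Submission
  imports Defs
begin

definition tgt :: "bigraph \<Rightarrow> (nat \<Rightarrow> nat) \<Rightarrow> nat \<Rightarrow> nat option" where
  "tgt G P r = (if P r < length (pref G r) then Some (pref G r ! P r) else None)"

definition acc :: "bigraph \<Rightarrow> (nat \<Rightarrow> nat) \<Rightarrow> nat \<Rightarrow> bool" where
  "acc G P r \<longleftrightarrow> red G r \<and> (\<exists>b. tgt G P r = Some b \<and>
      (\<forall>r'\<in>set (pref G b). r' \<noteq> r \<and> red G r' \<and> tgt G P r' = Some b \<longrightarrow> prefers G b r r'))"

primrec ptr :: "bigraph \<Rightarrow> nat \<Rightarrow> nat \<Rightarrow> nat" where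
  "ptr G 0 = (\<lambda>r. 0)"
| "ptr G (Suc t) = (\<lambda>r. ptr G t r +
      (if red G r \<and> tgt G (ptr G t) r \<noteq> None \<and> \<not> acc G (ptr G t) r then 1 else 0))"

definition active :: "bigraph \<Rightarrow> nat \<Rightarrow> nat \<Rightarrow> bool" where
  "active G t r \<longleftrightarrow> red G r \<and> tgt G (ptr G t) r \<noteq> None \<and> \<not> acc G (ptr G t) r"

lemma ptr_Suc': "ptr G (Suc t) r = ptr G t r + (if active G t r then 1 else 0)"
  by (simp add: active_def)

lemma ptr_nonred: "\<not> red G r \<Longrightarrow> ptr G t r = 0"
  by (induction t) auto

lemma ptr_le_len: "ptr G t r \<le> length (pref G r)"
  by (induction t) (auto simp: tgt_def split: if_splits)

lemma ptr_mono: "t \<le> t' \<Longrightarrow> ptr G t r \<le> ptr G t' r"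
proof (induction t' rule: dec_induct)
  case (step m) then show ?case using ptr_Suc'[of G m r] by simp
qed simp

lemma ptr_sum: "ptr G k r = (\<Sum>t<k. if active G t r then 1 else 0)"
  by (induction k) (simp_all add: ptr_Suc' del: ptr.simps(2))

lemma tgt_SomeD: "tgt G P r = Some b \<Longrightarrow> b \<in> set (pref G r) \<and> P r < length (pref G r) \<and> pref G r ! P r = b"
  by (auto simp: tgt_def split: if_splits)

lemma prefers_mem: "prefers G b x y \<Longrightarrow> x \<in> set (pref G b) \<and> y \<in> set (pref G b)"
  by (auto simp: prefers_def)

lemma prefers_asym: "distinct (pref G b) \<Longrightarrow> prefers G b x y \<Longrightarrow> \<not> prefers G b y x"
  unfolding prefers_def by (metis nth_eq_iff_index_eq order.strict_trans not_less_iff_gr_or_eq)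

lemma prefers_neq: "distinct (pref G b) \<Longrightarrow> prefers G b x y \<Longrightarrow> x \<noteq> y"
  unfolding prefers_def by (metis nth_eq_iff_index_eq order.strict_trans less_irrefl)

lemma prefers_trans: "distinct (pref G b) \<Longrightarrow> prefers G b x y \<Longrightarrow> prefers G b y z \<Longrightarrow> prefers G b x z"
  unfolding prefers_def by (metis nth_eq_iff_index_eq order.strict_trans)

lemma prefers_total: "x \<in> set (pref G b) \<Longrightarrow> y \<in> set (pref G b) \<Longrightarrow> x \<noteq> y \<Longrightarrow> prefers G b x y \<or> prefers G b y x"
  unfolding prefers_def in_set_conv_nth by (metis linorder_neqE_nat)

locale vg =
  fixes n :: nat and G :: bigraph and D :: nat
  assumes valid: "valid_bigraph n G"
  and deg: "\<And>u. u < n \<Longrightarrow> length (pref G u) \<le> D"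
begin

lemma dist: "u < n \<Longrightarrow> distinct (pref G u)"
  using valid by (auto simp: valid_bigraph_def)

lemma nbr_lt: "u < n \<Longrightarrow> v \<in> set (pref G u) \<Longrightarrow> v < n"
  using valid unfolding valid_bigraph_def by (meson atLeastLessThan_iff subsetD)

lemma symm: "u < n \<Longrightarrow> v \<in> set (pref G u) \<Longrightarrow> u \<in> set (pref G v)"
  using valid nbr_lt unfolding valid_bigraph_def by blast

lemma col: "u < n \<Longrightarrow> v \<in> set (pref G u) \<Longrightarrow> red G u \<noteq> red G v"
  using valid unfolding valid_bigraph_def by blast

abbreviation "tg t \<equiv> tgt G (ptr G t)"
abbreviation "ac t \<equiv> acc G (ptr G t)"

lemma acc_red: "ac t r \<Longrightarrow> red G r"
  by (simp add: acc_def)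

lemma acc_unique:
  assumes "r1 < n" "r2 < n" "ac t r1" "ac t r2" "tg t r1 = Some b" "tg t r2 = Some b"
  shows "r1 = r2"
proof (rule ccontr)
  assume ne: "r1 \<noteq> r2"
  have b1: "b \<in> set (pref G r1)" "b \<in> set (pref G r2)" using assms tgt_SomeD by blast+
  have bn: "b < n" using nbr_lt[OF assms(1) b1(1)] .
  have m: "r1 \<in> set (pref G b)" "r2 \<in> set (pref G b)" using symm assms b1 by blast+
  have A: "prefers G b r r'" if H: "ac t r" "tg t r = Some b" "r' \<in> set (pref G b)" "r' \<noteq> r" "red G r'" "tg t r' = Some b" for r r'
  proof -
    from H(1) obtain b' where b': "tg t r = Some b'" "\<forall>r'\<in>set (pref G b'). r' \<noteq> r \<and> red G r' \<and> tg t r' = Some b' \<longrightarrow> prefers G b' r r'"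
      unfolding acc_def by blast
    have "b' = b" using b'(1) H(2) by simp
    thus ?thesis using b'(2) H(3-6) by blast
  qed
  have "prefers G b r1 r2" using A[OF assms(3,5) m(2)] ne assms(4,6) acc_red by blast
  moreover have "prefers G b r2 r1" using A[OF assms(4,6) m(1)] ne assms(3,5) acc_red by blast
  ultimately show False using prefers_asym[OF dist[OF bn]] by blast
qed

lemma acc_exists:
  assumes "r0 < n" "red G r0" "tg t r0 = Some b"
  shows "\<exists>p. p < n \<and> ac t p \<and> tg t p = Some b \<and> (p = r0 \<or> prefers G b p r0)"
proof -
  define xs where "xs = pref G b"
  have b1: "b \<in> set (pref G r0)" using assms tgt_SomeD by blast
  have bn: "b < n" using nbr_lt[OF assms(1) b1] .
  have r0m: "r0 \<in> set xs" using symm assms(1) b1 xs_def by blast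
  define C where "C i \<longleftrightarrow> i < length xs \<and> red G (xs ! i) \<and> tg t (xs ! i) = Some b" for i
  obtain i1 where i1: "i1 < length xs" "xs ! i1 = r0" using r0m by (metis in_set_conv_nth)
  have Ci1: "C i1" using i1 assms C_def by auto
  define i0 where "i0 = (LEAST i. C i)"
  have Ci0: "C i0" unfolding i0_def using Ci1 by (rule LeastI)
  have le: "C j \<Longrightarrow> i0 \<le> j" for j unfolding i0_def by (rule Least_le)
  define p where "p = xs ! i0"
  have pm: "p \<in> set xs" using Ci0 C_def p_def by auto
  have pn: "p < n" using nbr_lt[OF bn] pm xs_def by auto
  have better: "prefers G b p r'" if H: "r' \<in> set xs" "r' \<noteq> p" "red G r'" "tg t r' = Some b" for r'
  proof -
    obtain j where j: "j < length xs" "xs ! j = r'" using H(1) by (metis in_set_conv_nth)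
    have "C j" using j H C_def by auto
    hence "i0 \<le> j" by (rule le)
    moreover have "i0 \<noteq> j" using j H(2) p_def by auto
    ultimately have "i0 < j" by simp
    thus ?thesis unfolding prefers_def using j p_def xs_def by blast
  qed
  have acp: "ac t p" unfolding acc_def using Ci0 C_def p_def better xs_def by auto
  have tp: "tg t p = Some b" using Ci0 C_def p_def by auto
  have "p = r0 \<or> prefers G b p r0"
    using better[OF r0m _ assms(2,3)] by blast
  thus ?thesis using pn acp tp by blast
qed

lemma acc_stay: "ac t p \<Longrightarrow> ptr G (Suc t) p = ptr G t p"
  by (simp add: ptr_Suc' active_def)

lemma acc_stay_tg: "ac t p \<Longrightarrow> tg (Suc t) p = tg t p"
  using acc_stay unfolding tgt_def by simp

lemma acc_next:
  assumes "p < n" "ac t p" "tg t p = Some b"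
  shows "\<exists>p'. p' < n \<and> ac (Suc t) p' \<and> tg (Suc t) p' = Some b \<and> (p' = p \<or> prefers G b p' p)"
proof -
  have "tg (Suc t) p = Some b" using acc_stay_tg[OF assms(2)] assms(3) by simp
  thus ?thesis using acc_exists[of p "Suc t" b] assms(1) acc_red[OF assms(2)] by blast
qed

lemma tg_nbr: "r < n \<Longrightarrow> tg t r = Some b \<Longrightarrow> b < n \<and> b \<in> set (pref G r) \<and> r \<in> set (pref G b)"
  using tgt_SomeD nbr_lt symm by blast

lemma inv_K:
  assumes "r < n" "red G r"
  shows "i < ptr G t r \<Longrightarrow> \<exists>p. p < n \<and> ac t p \<and> tg t p = Some (pref G r ! i) \<and> prefers G (pref G r ! i) p r"
proof (induction t arbitrary: i)
  case 0 then show ?case by simp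
next
  case (Suc t)
  define b where "b = pref G r ! i"
  have step: "\<exists>p'. p' < n \<and> ac (Suc t) p' \<and> tg (Suc t) p' = Some b \<and> prefers G b p' r"
    if H: "p < n" "ac t p" "tg t p = Some b" "prefers G b p r" for p
  proof -
    obtain p' where p': "p' < n" "ac (Suc t) p'" "tg (Suc t) p' = Some b" "p' = p \<or> prefers G b p' p"
      using acc_next[OF H(1-3)] by blast
    have bn: "b < n" using tg_nbr H by blast
    have "prefers G b p' r" using p'(4) H(4) prefers_trans[OF dist[OF bn]] by blast
    thus ?thesis using p' by blast
  qed
  show ?case
  proof (cases "i < ptr G t r")
    case True
    then show ?thesis using Suc.IH step b_def by blast
  next
    case False
    have act: "active G t r" and i: "i = ptr G t r" using Suc.prems False ptr_Suc'[of G t r] by (auto split: if_splits)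
    hence tgr: "tg t r = Some b" using b_def by (auto simp: active_def tgt_def split: if_splits)
    obtain p where p: "p < n" "ac t p" "tg t p = Some b" "p = r \<or> prefers G b p r"
      using acc_exists[OF assms tgr] by blast
    have "p \<noteq> r" using p act by (auto simp: active_def)
    then show ?thesis using step p b_def by blast
  qed
qed

end


context vg begin

definition "AC t = {r. r < n \<and> ac t r}"
definition "Xs t = {r. r < n \<and> red G r \<and> tg t r = None}"
definition "As t = {r. r < n \<and> active G t r}"
definition "Reds = {r. r < n \<and> red G r}"
definition "Bs t = {b. \<exists>r. r < n \<and> red G r \<and> tg t r = Some b}"

lemma fin: "finite (AC t)" "finite (Xs t)" "finite (As t)" "finite Reds" "finite (Bs t)"
proof -
  have "AC t \<subseteq> {..<n}" "Xs t \<subseteq> {..<n}" "As t \<subseteq> {..<n}" "Reds \<subseteq> {..<n}"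
    by (auto simp: AC_def Xs_def As_def Reds_def)
  thus "finite (AC t)" "finite (Xs t)" "finite (As t)" "finite Reds"
    by (auto intro: finite_subset)
  have "Bs t \<subseteq> {..<n}" unfolding Bs_def using tg_nbr by auto
  thus "finite (Bs t)" by (rule finite_subset) simp
qed

lemma card_partition: "card Reds = card (AC t) + card (As t) + card (Xs t)"
proof -
  have "Reds = AC t \<union> As t \<union> Xs t"
    unfolding Reds_def AC_def As_def Xs_def active_def using acc_red by auto
  moreover have "AC t \<inter> As t = {}" unfolding AC_def As_def active_def by blast
  moreover have "(AC t \<union> As t) \<inter> Xs t = {}"
    unfolding AC_def As_def Xs_def active_def acc_def by auto
  ultimately show ?thesis using fin by (simp add: card_Un_disjoint)
qed

lemma card_AC_Bs: "card (AC t) = card (Bs t)"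
proof -
  have "bij_betw (\<lambda>r. the (tg t r)) (AC t) (Bs t)"
  proof (rule bij_betw_imageI)
    show "inj_on (\<lambda>r. the (tg t r)) (AC t)"
    proof (rule inj_onI)
      fix x y assume xy: "x \<in> AC t" "y \<in> AC t" "the (tg t x) = the (tg t y)"
      obtain bx where bx: "tg t x = Some bx" using xy(1) by (auto simp: AC_def acc_def)
      obtain by' where by': "tg t y = Some by'" using xy(2) by (auto simp: AC_def acc_def)
      show "x = y" using acc_unique[of x y t bx] xy bx by' by (auto simp: AC_def)
    qed
    show "(\<lambda>r. the (tg t r)) ` AC t = Bs t"
    proof
      show "(\<lambda>r. the (tg t r)) ` AC t \<subseteq> Bs t"
        by (auto simp: AC_def Bs_def acc_def)
      show "Bs t \<subseteq> (\<lambda>r. the (tg t r)) ` AC t"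
      proof
        fix b assume "b \<in> Bs t"
        then obtain r where r: "r < n" "red G r" "tg t r = Some b" by (auto simp: Bs_def)
        obtain p where p: "p < n" "ac t p" "tg t p = Some b" using acc_exists[OF r] by blast
        thus "b \<in> (\<lambda>r. the (tg t r)) ` AC t" by (force simp: AC_def)
      qed
    qed
  qed
  thus ?thesis by (rule bij_betw_same_card)
qed

lemma Bs_Suc: "Bs t \<subseteq> Bs (Suc t)"
proof
  fix b assume "b \<in> Bs t"
  then obtain r where r: "r < n" "red G r" "tg t r = Some b" by (auto simp: Bs_def)
  obtain p where p: "p < n" "ac t p" "tg t p = Some b" using acc_exists[OF r] by blast
  have "tg (Suc t) p = Some b" using acc_stay_tg[OF p(2)] p(3) by simp
  thus "b \<in> Bs (Suc t)" using p acc_red unfolding Bs_def by blast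
qed

lemma Xs_Suc: "Xs t \<subseteq> Xs (Suc t)"
proof
  fix r assume "r \<in> Xs t"
  hence r: "r < n" "red G r" "tg t r = None" by (auto simp: Xs_def)
  have "ptr G t r \<ge> length (pref G r)" using r(3) by (auto simp: tgt_def split: if_splits)
  hence "ptr G (Suc t) r \<ge> length (pref G r)" using ptr_mono[of t "Suc t" G r] by simp
  hence "tg (Suc t) r = None" by (simp add: tgt_def)
  thus "r \<in> Xs (Suc t)" using r by (simp add: Xs_def)
qed

lemma Bs_mono: "t \<le> t' \<Longrightarrow> Bs t \<subseteq> Bs t'"
  using lift_Suc_mono_le[of Bs, OF Bs_Suc] by blast

lemma Xs_mono: "t \<le> t' \<Longrightarrow> Xs t \<subseteq> Xs t'"
  using lift_Suc_mono_le[of Xs, OF Xs_Suc] by blast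

lemma AC_mono: "t \<le> t' \<Longrightarrow> card (AC t) \<le> card (AC t')"
  unfolding card_AC_Bs by (intro card_mono fin Bs_mono)

lemma As_anti: "t \<le> t' \<Longrightarrow> card (As t') \<le> card (As t)"
proof -
  assume tt: "t \<le> t'"
  have a: "card (Xs t) \<le> card (Xs t')" by (intro card_mono fin Xs_mono tt)
  have b: "card (AC t) \<le> card (AC t')" using AC_mono[OF tt] .
  have c: "card Reds = card (AC t) + card (As t) + card (Xs t)" by (rule card_partition)
  have d: "card Reds = card (AC t') + card (As t') + card (Xs t')" by (rule card_partition)
  from a b c d show ?thesis by linarith
qed

lemma card_As_sum: "card (As t) = (\<Sum>r<n. if active G t r then 1 else 0)"
proof -
  have "As t = {..<n} \<inter> {r. active G t r}" by (auto simp: As_def)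
  thus ?thesis by (simp add: sum.If_cases)
qed

lemma sum_As: "(\<Sum>t<k. card (As t)) = (\<Sum>r<n. ptr G k r)"
proof -
  have "(\<Sum>t<k. card (As t)) = (\<Sum>t<k. \<Sum>r<n. if active G t r then 1 else 0)"
    by (simp add: card_As_sum)
  also have "\<dots> = (\<Sum>r<n. \<Sum>t<k. if active G t r then 1 else 0)"
    by (rule sum.swap)
  also have "\<dots> = (\<Sum>r<n. ptr G k r)" by (simp add: ptr_sum)
  finally show ?thesis .
qed

lemma sum_ptr_bound: "(\<Sum>r<n. ptr G t r) \<le> (D - 1) * card (AC t)"
proof -
  define S1 where "S1 = Sigma {..<n} (\<lambda>r. {..<ptr G t r})"
  define S2 where "S2 = Sigma (AC t) (\<lambda>p. set (pref G (the (tg t p))) - {p})"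
  define part where "part b = (THE p. p < n \<and> ac t p \<and> tg t p = Some b)" for b
  define f where "f = (\<lambda>(r, i). (part (pref G r ! i), r))"
  have card1: "card S1 = (\<Sum>r<n. ptr G t r)" unfolding S1_def by (simp add: card_SigmaI)
  have finS2: "finite S2" unfolding S2_def using fin by (intro finite_SigmaI) auto
  have partI: "part b = p" if "p < n" "ac t p" "tg t p = Some b" for p b
    unfolding part_def
  proof (rule the_equality)
    show "p < n \<and> ac t p \<and> tg t p = Some b" using that by blast
    show "q = p" if "q < n \<and> ac t q \<and> tg t q = Some b" for q
      using acc_unique[of q p t b] that \<open>p < n\<close> \<open>ac t p\<close> \<open>tg t p = Some b\<close> by blast
  qed
  have Kx: "\<exists>p. p < n \<and> ac t p \<and> tg t p = Some (pref G r ! i) \<and> prefers G (pref G r ! i) p r"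
    if "(r, i) \<in> S1" for r i
  proof -
    have r: "r < n" "i < ptr G t r" using that by (auto simp: S1_def)
    hence "red G r" using ptr_nonred[of G r t] by (cases "red G r") auto
    thus ?thesis using inv_K r by blast
  qed
  have img: "f ` S1 \<subseteq> S2"
  proof
    fix x assume "x \<in> f ` S1"
    then obtain r i where ri: "(r, i) \<in> S1" "x = f (r, i)" by auto
    obtain p where p: "p < n" "ac t p" "tg t p = Some (pref G r ! i)" "prefers G (pref G r ! i) p r"
      using Kx[OF ri(1)] by blast
    have "x = (p, r)" using ri(2) partI[OF p(1-3)] by (simp add: f_def)
    moreover have "p \<noteq> r" using prefers_neq[OF dist] p tg_nbr by blast
    moreover have "r \<in> set (pref G (pref G r ! i))" using prefers_mem p(4) by blast
    ultimately show "x \<in> S2" unfolding S2_def using p by (auto simp: AC_def)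
  qed
  have inj: "inj_on f S1"
  proof (rule inj_onI)
    fix x y assume xy: "x \<in> S1" "y \<in> S1" "f x = f y"
    obtain r i where x: "x = (r, i)" by (cases x)
    obtain r' i' where y: "y = (r', i')" by (cases y)
    obtain p where p: "p < n" "ac t p" "tg t p = Some (pref G r ! i)" "prefers G (pref G r ! i) p r"
      using Kx xy(1) x by blast
    obtain p' where p': "p' < n" "ac t p'" "tg t p' = Some (pref G r' ! i')" "prefers G (pref G r' ! i') p' r'"
      using Kx xy(2) y by blast
    have e: "p = p'" "r = r'" using xy(3) partI[OF p(1-3)] partI[OF p'(1-3)] x y by (auto simp: f_def)
    have "pref G r ! i = pref G r ! i'" using p(3) p'(3) e by simp
    moreover have "i < length (pref G r)" "i' < length (pref G r)"
      using xy x y e ptr_le_len[of G t r] by (auto simp: S1_def)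
    moreover have "distinct (pref G r)" using dist xy x by (auto simp: S1_def)
    ultimately have "i = i'" using nth_eq_iff_index_eq by blast
    thus "x = y" using x y e by simp
  qed
  have "card S1 \<le> card S2" using card_inj_on_le[OF inj img finS2] .
  also have "card S2 = (\<Sum>p\<in>AC t. card (set (pref G (the (tg t p))) - {p}))"
    unfolding S2_def using fin by (intro card_SigmaI) auto
  also have "\<dots> \<le> (\<Sum>p\<in>AC t. D - 1)"
  proof (rule sum_mono)
    fix p assume p: "p \<in> AC t"
    then obtain b where b: "tg t p = Some b" by (auto simp: AC_def acc_def)
    have pn: "p < n" using p by (auto simp: AC_def)
    have bb: "b < n" "p \<in> set (pref G b)" using tg_nbr[OF pn b] by auto
    have "card (set (pref G b) - {p}) = card (set (pref G b)) - 1" using bb by simp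
    also have "\<dots> = length (pref G b) - 1" using distinct_card[OF dist[OF bb(1)]] by simp
    also have "\<dots> \<le> D - 1" using deg[OF bb(1)] by simp
    finally show "card (set (pref G (the (tg t p))) - {p}) \<le> D - 1" using b by simp
  qed
  also have "\<dots> = (D - 1) * card (AC t)" by simp
  finally show ?thesis using card1 by simp
qed

end


context vg begin

lemma As_T0: "As (D * n + 1) = {}"
proof -
  define T0 where "T0 = D * n + 1"
  have "(\<Sum>t<T0. card (As T0)) \<le> (\<Sum>t<T0. card (As t))"
    by (intro sum_mono As_anti) simp
  also have "\<dots> = (\<Sum>r<n. ptr G T0 r)" by (rule sum_As)
  also have "\<dots> \<le> (\<Sum>r<n. D)"
    by (intro sum_mono) (metis ptr_le_len deg le_trans lessThan_iff)
  also have "\<dots> = D * n" by simp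
  finally have "T0 * card (As T0) \<le> D * n" by simp
  moreover have "T0 \<le> T0 * card (As T0)" if "card (As T0) \<noteq> 0" using that by simp
  ultimately have "card (As T0) = 0" unfolding T0_def by linarith
  thus ?thesis using fin T0_def by simp
qed

lemma As_empty: "D * n + 1 \<le> t \<Longrightarrow> As t = {}"
  using As_anti[of "D * n + 1" t] As_T0 fin(3)[of t] by simp

lemma trunc: "k \<le> T \<Longrightarrow> D * n + 1 \<le> T \<Longrightarrow> card (AC T) \<le> card (AC k) + card (As k)"
proof -
  assume a: "k \<le> T" "D * n + 1 \<le> T"
  have "card (Xs k) \<le> card (Xs T)" by (intro card_mono fin Xs_mono a)
  moreover have "card Reds = card (AC k) + card (As k) + card (Xs k)" by (rule card_partition)
  moreover have "card Reds = card (AC T) + card (As T) + card (Xs T)" by (rule card_partition)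
  moreover have "card (As T) = 0" using As_empty[OF a(2)] by simp
  ultimately show ?thesis by linarith
qed

lemma As_bound: "k * card (As k) \<le> (D - 1) * card (AC k)"
proof -
  have "(\<Sum>t<k. card (As k)) \<le> (\<Sum>t<k. card (As t))"
    by (intro sum_mono As_anti) simp
  also have "\<dots> = (\<Sum>r<n. ptr G k r)" by (rule sum_As)
  also have "\<dots> \<le> (D - 1) * card (AC k)" by (rule sum_ptr_bound)
  finally show ?thesis by simp
qed

definition "MT t = (\<lambda>r. {r, the (tg t r)}) ` AC t"

lemma AC_tg: "r \<in> AC t \<Longrightarrow> \<exists>b. tg t r = Some b \<and> b < n \<and> b \<in> set (pref G r) \<and> r \<in> set (pref G b) \<and> red G r \<and> \<not> red G b \<and> r < n"
proof -
  assume r: "r \<in> AC t"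
  then obtain b where b: "tg t r = Some b" by (auto simp: AC_def acc_def)
  have rn: "r < n" "red G r" using r acc_red by (auto simp: AC_def)
  have "b < n \<and> b \<in> set (pref G r) \<and> r \<in> set (pref G b)" using tg_nbr[OF rn(1) b] .
  moreover have "\<not> red G b" using col[of r b] calculation rn by blast
  ultimately show ?thesis using b rn by blast
qed

lemma card_MT: "card (MT t) = card (AC t)"
  unfolding MT_def
proof (rule card_image, rule inj_onI)
  fix x y assume xy: "x \<in> AC t" "y \<in> AC t" "{x, the (tg t x)} = {y, the (tg t y)}"
  obtain bx where bx: "tg t x = Some bx" "red G x" "\<not> red G bx" using AC_tg[OF xy(1)] by blast
  obtain by' where by': "tg t y = Some by'" "red G y" "\<not> red G by'" using AC_tg[OF xy(2)] by blast
  have "x \<in> {y, by'}" using xy(3) bx by' by auto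
  thus "x = y" using bx by' by auto
qed

lemma matching_MT: "matching n G (MT t)"
  unfolding matching_def
proof
  show "MT t \<subseteq> {{u, v} |u v. edge n G u v}"
  proof
    fix e assume "e \<in> MT t"
    then obtain r where r: "r \<in> AC t" "e = {r, the (tg t r)}" by (auto simp: MT_def)
    obtain b where b: "tg t r = Some b" "b \<in> set (pref G r)" "r < n" using AC_tg[OF r(1)] by blast
    have "edge n G r b" using b by (simp add: edge_def)
    thus "e \<in> {{u, v} |u v. edge n G u v}" using r b by auto
  qed
  show "\<forall>e\<in>MT t. \<forall>e'\<in>MT t. e \<noteq> e' \<longrightarrow> e \<inter> e' = {}"
  proof (intro ballI impI)
    fix e e' assume e: "e \<in> MT t" "e' \<in> MT t" "e \<noteq> e'"
    obtain r where r: "r \<in> AC t" "e = {r, the (tg t r)}" using e(1) by (auto simp: MT_def)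
    obtain r' where r': "r' \<in> AC t" "e' = {r', the (tg t r')}" using e(2) by (auto simp: MT_def)
    obtain b where b: "tg t r = Some b" "red G r" "\<not> red G b" "r < n" using AC_tg[OF r(1)] by blast
    obtain b' where b': "tg t r' = Some b'" "red G r'" "\<not> red G b'" "r' < n" using AC_tg[OF r'(1)] by blast
    have "r \<noteq> r'" using e(3) r r' by auto
    hence "b \<noteq> b'" using acc_unique[of r r' t b] r r' b b' by (auto simp: AC_def)
    show "e \<inter> e' = {}" using r r' b b' \<open>r \<noteq> r'\<close> \<open>b \<noteq> b'\<close> by auto
  qed
qed

lemma unstable_sym: "unstable_edge n G M u v \<Longrightarrow> unstable_edge n G M v u"
proof -
  assume a: "unstable_edge n G M u v"
  hence e: "u < n" "v \<in> set (pref G u)" by (auto simp: unstable_edge_def edge_def)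
  have "edge n G v u" using nbr_lt[OF e] symm[OF e] by (simp add: edge_def)
  moreover have "{v, u} = {u, v}" by auto
  ultimately show ?thesis using a unfolding unstable_edge_def by metis
qed

lemma stable_MT:
  assumes T: "D * n + 1 \<le> T"
  shows "stable_matching n G (MT T)"
proof -
  have noun: False if un: "unstable_edge n G (MT T) u v" "red G u" for u v
  proof -
    have e: "u < n" "v \<in> set (pref G u)" using un by (auto simp: unstable_edge_def edge_def)
    have vn: "v < n" using nbr_lt[OF e] .
    obtain j where j: "j < length (pref G u)" "pref G u ! j = v" using e(2) by (metis in_set_conv_nth)
    have jlt: "j < ptr G T u"
    proof (cases "u \<in> AC T")
      case True
      obtain w where w: "tg T u = Some w" using AC_tg[OF True] by blast
      have "{u, w} \<in> MT T" using True w by (force simp: MT_def)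
      hence pw: "prefers G u v w" using un(1) by (auto simp: unstable_edge_def)
      obtain i j' where ij: "i < j'" "j' < length (pref G u)" "pref G u ! i = v" "pref G u ! j' = w"
        using pw by (auto simp: prefers_def)
      have "i = j" using ij j dist[OF e(1)] nth_eq_iff_index_eq by (metis order.strict_trans)
      moreover have "j' = ptr G T u" using w ij dist[OF e(1)] nth_eq_iff_index_eq tgt_SomeD by metis
      ultimately show ?thesis using ij by simp
    next
      case False
      hence "\<not> ac T u" using e(1) by (simp add: AC_def)
      moreover have "u \<notin> As T" using As_empty[OF T] by simp
      ultimately have "tg T u = None" using e(1) un(2) by (auto simp: As_def active_def)
      hence "ptr G T u \<ge> length (pref G u)" by (auto simp: tgt_def split: if_splits)
      thus ?thesis using j by simp
    qed
    obtain p where p: "p < n" "ac T p" "tg T p = Some v" "prefers G v p u"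
      using inv_K[OF e(1) un(2) jlt] j by auto
    have "{p, v} \<in> MT T" using p by (force simp: MT_def AC_def)
    hence "{v, p} \<in> MT T" by (simp add: insert_commute)
    hence "prefers G v u p" using un(1) by (auto simp: unstable_edge_def)
    thus False using prefers_asym[OF dist[OF vn] p(4)] by blast
  qed
  have "\<nexists>u v. unstable_edge n G (MT T) u v"
  proof (intro notI, elim exE)
    fix u v assume un: "unstable_edge n G (MT T) u v"
    have e: "u < n" "v \<in> set (pref G u)" using un by (auto simp: unstable_edge_def edge_def)
    show False
    proof (cases "red G u")
      case True then show ?thesis using noun un by blast
    next
      case False
      hence "red G v" using col[OF e] by simp
      then show ?thesis using noun unstable_sym[OF un] by blast
    qed
  qed
  thus ?thesis using matching_MT by (simp add: stable_matching_def)
qed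

lemma lower_bound:
  assumes st: "stable_matching n G M" and ni: "no_isolated n G"
  shows "n \<le> 2 * (D + 1) * card M"
proof -
  have mat: "matching n G M" using st by (simp add: stable_matching_def)
  define V where "V = \<Union> M"
  have Msub: "\<forall>e\<in>M. \<exists>u v. e = {u, v} \<and> u < n \<and> v < n"
  proof
    fix e assume "e \<in> M"
    hence "e \<in> {{u, v} |u v. edge n G u v}" using mat unfolding matching_def by blast
    then obtain u v where uv: "e = {u, v}" "edge n G u v" by blast
    hence "u < n" "v < n" using nbr_lt by (auto simp: edge_def)
    thus "\<exists>u v. e = {u, v} \<and> u < n \<and> v < n" using uv by blast
  qed
  have finM: "finite M"
  proof -
    have "M \<subseteq> Pow {..<n}" using Msub by auto
    thus ?thesis by (rule finite_subset) simp
  qed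
  have Vn: "V \<subseteq> {..<n}" using Msub V_def by auto
  have finV: "finite V" using Vn finite_subset by blast
  have cardV: "card V \<le> 2 * card M"
  proof -
    have "card V \<le> (\<Sum>e\<in>M. card e)" unfolding V_def by (rule card_Union_le_sum_card)
    also have "\<dots> \<le> (\<Sum>e\<in>M. 2)"
    proof (rule sum_mono)
      fix e assume "e \<in> M"
      then obtain u v where "e = {u, v}" using Msub by blast
      thus "card e \<le> 2" by (simp add: card_insert_if)
    qed
    finally show ?thesis by simp
  qed
  have cover: "{..<n} \<subseteq> (\<Union>y\<in>V. insert y (set (pref G y)))"
  proof
    fix x assume x: "x \<in> {..<n}"
    show "x \<in> (\<Union>y\<in>V. insert y (set (pref G y)))"
    proof (cases "x \<in> V")
      case True then show ?thesis by blast
    next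
      case False
      define y where "y = hd (pref G x)"
      have ne: "pref G x \<noteq> []" using ni x by (simp add: no_isolated_def)
      have y: "y \<in> set (pref G x)" using ne y_def by simp
      have yV: "y \<in> V"
      proof (rule ccontr)
        assume yV: "y \<notin> V"
        have "unstable_edge n G M x y"
          unfolding unstable_edge_def edge_def using x y False yV V_def by auto
        thus False using st by (auto simp: stable_matching_def)
      qed
      have "x \<in> set (pref G y)" using symm[of x y] x y by simp
      thus ?thesis using yV by blast
    qed
  qed
  have "n = card {..<n}" by simp
  also have "\<dots> \<le> card (\<Union>y\<in>V. insert y (set (pref G y)))"
    using cover by (intro card_mono) (auto simp: finV)
  also have "\<dots> \<le> (\<Sum>y\<in>V. card (insert y (set (pref G y))))" by (rule card_UN_le[OF finV])
  also have "\<dots> \<le> (\<Sum>y\<in>V. D + 1)"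
  proof (rule sum_mono)
    fix y assume "y \<in> V"
    hence yn: "y < n" using Vn by auto
    have "card (insert y (set (pref G y))) \<le> card (set (pref G y)) + 1" by (simp add: card_insert_if)
    also have "\<dots> \<le> length (pref G y) + 1" using card_length by simp
    also have "\<dots> \<le> D + 1" using deg[OF yn] by simp
    finally show "card (insert y (set (pref G y))) \<le> D + 1" .
  qed
  also have "\<dots> = (D + 1) * card V" by simp
  also have "\<dots> \<le> (D + 1) * (2 * card M)" using cardV by (rule mult_le_mono2)
  finally show ?thesis by simp
qed

end


primrec nball :: "bigraph \<Rightarrow> nat \<Rightarrow> nat \<Rightarrow> nat set" where
  "nball G r 0 = {r}"
| "nball G r (Suc d) = insert r (\<Union>x\<in>set (pref G r). nball G x d)"

lemma ball_self: "r \<in> nball G r d"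
  by (cases d) auto

lemma ball_Suc: "nball G r d \<subseteq> nball G r (Suc d)"
proof (induction d arbitrary: r)
  case 0 then show ?case by auto
next
  case (Suc d) then show ?case by (simp only: nball.simps) blast
qed

lemma ball_mono: "d \<le> d' \<Longrightarrow> nball G r d \<subseteq> nball G r d'"
  using lift_Suc_mono_le[of "nball G r", OF ball_Suc] by blast

lemma ball_nbr: "x \<in> set (pref G r) \<Longrightarrow> Suc d = e \<Longrightarrow> nball G x d \<subseteq> nball G r e"
  by auto

definition agree :: "bigraph \<Rightarrow> bigraph \<Rightarrow> nat set \<Rightarrow> bool" where
  "agree G G' S \<longleftrightarrow> (\<forall>x\<in>S. red G x = red G' x \<and> pref G x = pref G' x)"

lemma agree_sub: "agree G G' S \<Longrightarrow> T \<subseteq> S \<Longrightarrow> agree G G' T"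
  by (auto simp: agree_def)

lemma acc_cong:
  assumes "red G r = red G' r" "tgt G P r = tgt G' P' r"
    and "\<And>b. tgt G P r = Some b \<Longrightarrow> pref G b = pref G' b \<and>
            (\<forall>r'\<in>set (pref G b). red G r' = red G' r' \<and> tgt G P r' = tgt G' P' r')"
  shows "acc G P r = acc G' P' r"
proof
  assume a: "acc G P r"
  then obtain b where b: "tgt G P r = Some b"
    "\<forall>r'\<in>set (pref G b). r' \<noteq> r \<and> red G r' \<and> tgt G P r' = Some b \<longrightarrow> prefers G b r r'"
    unfolding acc_def by blast
  have c: "pref G b = pref G' b" "\<forall>r'\<in>set (pref G b). red G r' = red G' r' \<and> tgt G P r' = tgt G' P' r'"
    using assms(3)[OF b(1)] by auto
  have "prefers G' b r r' = prefers G b r r'" for r' using c(1) by (simp add: prefers_def)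
  thus "acc G' P' r" unfolding acc_def using a assms(1,2) b c by (auto simp: acc_def)
next
  assume a: "acc G' P' r"
  then obtain b where b: "tgt G' P' r = Some b"
    "\<forall>r'\<in>set (pref G' b). r' \<noteq> r \<and> red G' r' \<and> tgt G' P' r' = Some b \<longrightarrow> prefers G' b r r'"
    unfolding acc_def by blast
  have b1: "tgt G P r = Some b" using b assms(2) by simp
  have c: "pref G b = pref G' b" "\<forall>r'\<in>set (pref G b). red G r' = red G' r' \<and> tgt G P r' = tgt G' P' r'"
    using assms(3)[OF b1] by auto
  have "prefers G' b r r' = prefers G b r r'" for r' using c(1) by (simp add: prefers_def)
  thus "acc G P r" unfolding acc_def using a assms(1,2) b b1 c by (auto simp: acc_def)
qed

lemma loc_ptr: "agree G G' (nball G r (2 * t)) \<Longrightarrow> ptr G t r = ptr G' t r"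
  and loc_acc: "agree G G' (nball G r (2 * t + 2)) \<Longrightarrow>
     tgt G (ptr G t) r = tgt G' (ptr G' t) r \<and> acc G (ptr G t) r = acc G' (ptr G' t) r"
proof -
  have main: "(\<forall>r. agree G G' (nball G r (2 * t)) \<longrightarrow> ptr G t r = ptr G' t r) \<and>
     (\<forall>r. agree G G' (nball G r (2 * t + 2)) \<longrightarrow>
        tgt G (ptr G t) r = tgt G' (ptr G' t) r \<and> acc G (ptr G t) r = acc G' (ptr G' t) r)"
  proof (induction t)
    have step: "tgt G (ptr G t) r = tgt G' (ptr G' t) r \<and> acc G (ptr G t) r = acc G' (ptr G' t) r"
      if IH: "\<forall>r. agree G G' (nball G r (2 * t)) \<longrightarrow> ptr G t r = ptr G' t r"
      and ag: "agree G G' (nball G r (2 * t + 2))" for t r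
    proof -
      have sub1: "nball G r (2 * t) \<subseteq> nball G r (2 * t + 2)" by (rule ball_mono) simp
      have pr: "ptr G t r = ptr G' t r" using IH agree_sub[OF ag sub1] by blast
      have rr: "red G r = red G' r" "pref G r = pref G' r" using ag ball_self unfolding agree_def by blast+
      have tg: "tgt G (ptr G t) r = tgt G' (ptr G' t) r" using pr rr by (simp add: tgt_def)
      have ac: "acc G (ptr G t) r = acc G' (ptr G' t) r"
      proof (rule acc_cong[OF rr(1) tg])
        fix b assume b: "tgt G (ptr G t) r = Some b"
        have bm: "b \<in> set (pref G r)" using tgt_SomeD[OF b] by blast
        have bsub: "nball G b (2 * t + 1) \<subseteq> nball G r (2 * t + 2)" by (rule ball_nbr[OF bm]) simp
        have pb: "pref G b = pref G' b" using ag bsub ball_self unfolding agree_def by blast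
        have "red G r' = red G' r' \<and> tgt G (ptr G t) r' = tgt G' (ptr G' t) r'"
          if r': "r' \<in> set (pref G b)" for r'
        proof -
          have s2: "nball G r' (2 * t) \<subseteq> nball G r (2 * t + 2)"
            using ball_nbr[OF r', of "2 * t" "2 * t + 1"] bsub by (meson Suc_eq_plus1 order_trans)
          have ag2: "agree G G' (nball G r' (2 * t))" using agree_sub[OF ag s2] .
          have "ptr G t r' = ptr G' t r'" using IH ag2 by blast
          moreover have "red G r' = red G' r'" "pref G r' = pref G' r'"
            using ag2 ball_self unfolding agree_def by blast+
          ultimately show ?thesis by (simp add: tgt_def)
        qed
        thus "pref G b = pref G' b \<and> (\<forall>r'\<in>set (pref G b). red G r' = red G' r' \<and> tgt G (ptr G t) r' = tgt G' (ptr G' t) r')"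
          using pb by blast
      qed
      show ?thesis using tg ac by blast
    qed
    {
      case 0
      have "\<forall>r. agree G G' (nball G r (2 * 0)) \<longrightarrow> ptr G 0 r = ptr G' 0 r" by simp
      thus ?case using step by blast
    next
      case (Suc t)
      have A: "\<forall>r. agree G G' (nball G r (2 * Suc t)) \<longrightarrow> ptr G (Suc t) r = ptr G' (Suc t) r"
      proof (intro allI impI)
        fix r assume ag: "agree G G' (nball G r (2 * Suc t))"
        have ag': "agree G G' (nball G r (2 * t + 2))" using ag by simp
        have ag0: "agree G G' (nball G r (2 * t))" by (rule agree_sub[OF ag']) (rule ball_mono, simp)
        have "ptr G t r = ptr G' t r" using Suc.IH ag0 by blast
        moreover have "red G r = red G' r" using ag ball_self unfolding agree_def by blast
        moreover have "tgt G (ptr G t) r = tgt G' (ptr G' t) r \<and> acc G (ptr G t) r = acc G' (ptr G' t) r"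
          using Suc.IH ag' by blast
        ultimately show "ptr G (Suc t) r = ptr G' (Suc t) r" by simp
      qed
      thus ?case using step by blast
    }
  qed
  show "agree G G' (nball G r (2 * t)) \<Longrightarrow> ptr G t r = ptr G' t r" using main by blast
  show "agree G G' (nball G r (2 * t + 2)) \<Longrightarrow>
     tgt G (ptr G t) r = tgt G' (ptr G' t) r \<and> acc G (ptr G t) r = acc G' (ptr G' t) r" using main by blast
qed


type_synonym view = "nat \<Rightarrow> (bool \<times> nat list) option"

primrec explore :: "nat \<Rightarrow> nat \<Rightarrow> view \<Rightarrow> (view \<Rightarrow> alg) \<Rightarrow> alg" where
  "explore 0 = (\<lambda>v V k. Query v (\<lambda>a. k (V(v := Some a))))"
| "explore (Suc d) = (\<lambda>v V k. Query v (\<lambda>a. foldr (\<lambda>x c V'. explore d x V' c) (snd a) k (V(v := Some a))))"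

primrec collect :: "bigraph \<Rightarrow> nat \<Rightarrow> nat \<Rightarrow> view \<Rightarrow> view" where
  "collect G 0 = (\<lambda>v V. V(v := Some (answer G v)))"
| "collect G (Suc d) = (\<lambda>v V. fold (\<lambda>x V'. collect G d x V') (pref G v) (V(v := Some (answer G v))))"

lemma answer_simps[simp]: "snd (answer G v) = pref G v" "fst (answer G v) = red G v"
  by (simp_all add: answer_def)

lemma run_explore: "run n G (explore d v V k) = run n G (k (collect G d v V))"
proof (induction d arbitrary: v V k)
  case 0 then show ?case by (simp add: fun_upd_def)
next
  case (Suc d)
  have L: "run n G (foldr (\<lambda>x c V'. explore d x V' c) xs k V) = run n G (k (fold (\<lambda>x V'. collect G d x V') xs V))"
    for xs V
    by (induction xs arbitrary: V) (simp_all add: Suc.IH)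
  show ?case by (simp add: L fun_upd_def)
qed

lemma queries_mono: "queries_le n G a b \<Longrightarrow> b \<le> b' \<Longrightarrow> queries_le n G a b'"
proof (induction a arbitrary: b b')
  case (Flip f)
  then show ?case by simp (metis rangeI)
next
  case (Sample f)
  then show ?case by simp (metis rangeI)
next
  case (Query v f)
  then show ?case by simp (metis rangeI diff_right_mono order_trans)
qed auto

primrec Qd :: "real \<Rightarrow> nat \<Rightarrow> real" where
  "Qd D 0 = 1"
| "Qd D (Suc d) = 1 + D * Qd D d"

lemma Qd_nonneg: "D \<ge> 0 \<Longrightarrow> Qd D d \<ge> 0"
  by (induction d) auto

lemma Qd_closed: "(D - 1) * Qd D d = D ^ (Suc d) - 1"
  by (induction d) (simp_all add: algebra_simps)

lemma legal_mono: "legal K a \<Longrightarrow> K \<subseteq> K' \<Longrightarrow> legal K' a"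
proof (induction a arbitrary: K K')
  case (Flip f)
  then show ?case by simp (metis rangeI)
next
  case (Sample f)
  show ?case unfolding legal.simps
  proof
    fix v
    have "legal (insert v K) (f v)" using Sample.prems by simp
    moreover have "insert v K \<subseteq> insert v K'" using Sample.prems by blast
    ultimately show "legal (insert v K') (f v)" using Sample.IH[of "f v"] by blast
  qed
next
  case (Query v f)
  have v: "v \<in> K'" using Query.prems by auto
  show ?case unfolding legal.simps
  proof (intro conjI allI v)
    fix a
    have "legal (K \<union> set (snd a)) (f a)" using Query.prems by (cases a) simp
    moreover have "K \<union> set (snd a) \<subseteq> K' \<union> set (snd a)" using Query.prems by blast
    ultimately show "legal (K' \<union> set (snd a)) (f a)" using Query.IH[of "f a"] by blast
  qed
qed auto

lemma legal_explore:
  "v \<in> K \<Longrightarrow> (\<And>K' V'. K \<subseteq> K' \<Longrightarrow> legal K' (k V')) \<Longrightarrow> legal K (explore d v V k)"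
proof (induction d arbitrary: v V k K)
  case 0 then show ?case by auto
next
  case (Suc d)
  have L: "set xs \<subseteq> K \<Longrightarrow> (\<And>K' V'. K \<subseteq> K' \<Longrightarrow> legal K' (k V')) \<Longrightarrow>
            legal K (foldr (\<lambda>x c V'. explore d x V' c) xs k V)" for xs K V
  proof (induction xs arbitrary: K V)
    case Nil then show ?case by auto
  next
    case (Cons x xs)
    show ?case
      using Cons.prems by (auto intro!: Suc.IH Cons.IH)
  qed
  show ?case using Suc.prems by (auto intro!: L)
qed


definition good :: "bigraph \<Rightarrow> view \<Rightarrow> bool" where
  "good G V \<longleftrightarrow> (\<forall>x a. V x = Some a \<longrightarrow> a = answer G x)"

lemma collect_good: "good G V \<Longrightarrow> good G (collect G d v V)"
proof (induction d arbitrary: v V)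
  case 0 then show ?case by (auto simp: good_def)
next
  case (Suc d)
  have "good G (fold (\<lambda>x V'. collect G d x V') xs V)" if "good G V" for xs V
    using that by (induction xs arbitrary: V) (simp_all add: Suc.IH)
  moreover have "good G (V(v := Some (answer G v)))" using Suc.prems by (auto simp: good_def)
  ultimately show ?case by simp
qed

lemma collect_dom: "V x \<noteq> None \<Longrightarrow> collect G d v V x \<noteq> None"
proof (induction d arbitrary: v V)
  case 0 then show ?case by auto
next
  case (Suc d)
  have F: "fold (\<lambda>x V'. collect G d x V') xs V x \<noteq> None" if "V x \<noteq> None" for xs V
    using that
  proof (induction xs arbitrary: V)
    case Nil then show ?case by simp
  next
    case (Cons z xs)
    have "collect G d z V x \<noteq> None" using Suc.IH Cons.prems by blast
    thus ?case using Cons.IH[of "collect G d z V"] by simp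
  qed
  have "(V(v := Some (answer G v))) x \<noteq> None" using Suc.prems by simp
  thus ?case using F[of "V(v := Some (answer G v))" "pref G v"] by simp
qed

lemma collect_ball: "x \<in> nball G v d \<Longrightarrow> collect G d v V x \<noteq> None"
proof (induction d arbitrary: v V)
  case 0 then show ?case by auto
next
  case (Suc d)
  have F: "fold (\<lambda>x V'. collect G d x V') xs V x \<noteq> None" if "V x \<noteq> None" for xs V
    using that
  proof (induction xs arbitrary: V)
    case Nil then show ?case by simp
  next
    case (Cons z xs)
    have "collect G d z V x \<noteq> None" using collect_dom Cons.prems by blast
    thus ?case using Cons.IH[of "collect G d z V"] by simp
  qed
  have F2: "fold (\<lambda>x V'. collect G d x V') xs V x \<noteq> None" if "y \<in> set xs" "x \<in> nball G y d" for xs V y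
    using that
  proof (induction xs arbitrary: V)
    case Nil then show ?case by simp
  next
    case (Cons z xs)
    show ?case
    proof (cases "y = z")
      case True
      hence "collect G d z V x \<noteq> None" using Suc.IH Cons.prems by blast
      thus ?thesis using F[of "collect G d z V" xs] by simp
    next
      case False
      hence "y \<in> set xs" using Cons.prems by simp
      thus ?thesis using Cons.IH[of "collect G d z V"] Cons.prems(2) by simp
    qed
  qed
  show ?case
  proof (cases "x = v")
    case True
    hence "(V(v := Some (answer G v))) x \<noteq> None" by simp
    thus ?thesis using F[of "V(v := Some (answer G v))" "pref G v"] by simp
  next
    case False
    then obtain y where "y \<in> set (pref G v)" "x \<in> nball G y d" using Suc.prems by auto
    thus ?thesis using F2[of y "pref G v" "V(v := Some (answer G v))"] by simp
  qed
qed

definition gv :: "view \<Rightarrow> bigraph" where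
  "gv V = \<lparr>red = (\<lambda>x. case V x of Some a \<Rightarrow> fst a | None \<Rightarrow> False),
           pref = (\<lambda>x. case V x of Some a \<Rightarrow> snd a | None \<Rightarrow> [])\<rparr>"

lemma agree_gv: "good G V \<Longrightarrow> (\<forall>x\<in>S. V x \<noteq> None) \<Longrightarrow> agree G (gv V) S"
  unfolding agree_def good_def gv_def answer_def by (auto split: option.splits)

definition Xv :: "nat \<Rightarrow> nat \<Rightarrow> view \<Rightarrow> real" where
  "Xv k u V = (if red (gv V) u \<and> acc (gv V) (ptr (gv V) k) u then 1 else 0)"

lemma Xv_collect: "Xv k u (collect G (2 * k + 2) u Map.empty) = (if red G u \<and> acc G (ptr G k) u then 1 else 0)"
proof -
  define V where "V = collect G (2 * k + 2) u Map.empty"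
  have "good G Map.empty" by (simp add: good_def)
  hence "good G V" unfolding V_def by (rule collect_good)
  moreover have "\<forall>x\<in>nball G u (2 * k + 2). V x \<noteq> None" unfolding V_def using collect_ball by blast
  ultimately have ag: "agree G (gv V) (nball G u (2 * k + 2))" by (rule agree_gv)
  have "acc G (ptr G k) u = acc (gv V) (ptr (gv V) k) u" using loc_acc[OF ag] by blast
  moreover have "red G u = red (gv V) u" using ag ball_self unfolding agree_def by blast
  ultimately show ?thesis unfolding Xv_def V_def by simp
qed

primrec loop :: "nat \<Rightarrow> nat \<Rightarrow> (real \<Rightarrow> real) \<Rightarrow> real \<Rightarrow> alg" where
  "loop 0 k f a = Output (f a)"
| "loop (Suc s) k f a = Sample (\<lambda>u. explore (2 * k + 2) u Map.empty (\<lambda>V. loop s k f (a + Xv k u V)))"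

lemma legal_loop: "legal K (loop s k f a)"
proof (induction s arbitrary: K a)
  case 0 then show ?case by simp
next
  case (Suc s)
  show ?case unfolding loop.simps legal.simps
    by (intro allI legal_explore insertI1 Suc.IH)
qed


context vg begin

lemma queries_explore:
  "v < n \<Longrightarrow> c \<ge> 0 \<Longrightarrow> (\<And>V'. queries_le n G (k V') c) \<Longrightarrow>
   queries_le n G (explore d v V k) (c + Qd (real D) d)"
proof (induction d arbitrary: v V k c)
  case 0
  then show ?case by simp
next
  case (Suc d)
  have Q0: "Qd (real D) d \<ge> 0" by (rule Qd_nonneg) simp
  have L: "set xs \<subseteq> {..<n} \<Longrightarrow> queries_le n G (foldr (\<lambda>x c V'. explore d x V' c) xs k V)
            (c + real (length xs) * Qd (real D) d)" for xs V
  proof (induction xs arbitrary: V)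
    case Nil then show ?case using Suc.prems by simp
  next
    case (Cons z xs)
    have c0: "c + real (length xs) * Qd (real D) d \<ge> 0" using Suc.prems Q0 by simp
    have "queries_le n G (explore d z V (foldr (\<lambda>x c V'. explore d x V' c) xs k))
          (c + real (length xs) * Qd (real D) d + Qd (real D) d)"
      using Cons by (intro Suc.IH c0) auto
    thus ?case by (simp add: algebra_simps)
  qed
  have sub: "set (pref G v) \<subseteq> {..<n}" using nbr_lt Suc.prems by auto
  have len: "real (length (pref G v)) \<le> real D" using deg Suc.prems by simp
  have A: "queries_le n G (foldr (\<lambda>x c V'. explore d x V' c) (pref G v) k (V(v := Some (answer G v))))
            (c + real D * Qd (real D) d)"
    by (rule queries_mono[OF L[OF sub]]) (simp add: mult_right_mono[OF len Q0])
  have B: "1 \<le> c + Qd (real D) (Suc d)" using Suc.prems Q0 by simp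
  show ?case using A B by simp
qed

lemma queries_loop:
  assumes "n > 0"
  shows "queries_le n G (loop s k f a) (real s * Qd (real D) (2 * k + 2))"
proof (induction s arbitrary: a)
  case 0 then show ?case by simp
next
  case (Suc s)
  have Q0: "Qd (real D) (2 * k + 2) \<ge> 0" by (rule Qd_nonneg) simp
  have "queries_le n G (explore (2 * k + 2) u Map.empty (\<lambda>V. loop s k f (a + Xv k u V)))
          (real s * Qd (real D) (2 * k + 2) + Qd (real D) (2 * k + 2))" if "u < n" for u
    using that Q0 by (intro queries_explore Suc.IH) auto
  thus ?case by (simp add: algebra_simps)
qed

definition "Xg k u \<longleftrightarrow> red G u \<and> acc G (ptr G k) u"
definition "pk k = real (card {u \<in> {0..<n}. Xg k u}) / real n"

lemma pk_range: "pk k \<in> {0..1}"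
proof -
  have "card {u \<in> {0..<n}. Xg k u} \<le> card {0..<n}" by (rule card_mono) auto
  hence "card {u \<in> {0..<n}. Xg k u} \<le> n" by simp
  thus ?thesis unfolding pk_def by (cases "n = 0") (auto simp: divide_le_eq_1)
qed

lemma map_Xg:
  assumes "n > 0"
  shows "map_pmf (Xg k) (pmf_of_set {0..<n}) = bernoulli_pmf (pk k)"
proof (rule pmf_eqI)
  fix b :: bool
  have ne: "{0..<n} \<noteq> {}" using assms by simp
  have p: "0 \<le> pk k" "pk k \<le> 1" using pk_range by auto
  have split: "card {u \<in> {0..<n}. Xg k u} + card {u \<in> {0..<n}. \<not> Xg k u} = n"
  proof -
    have "card ({u \<in> {0..<n}. Xg k u} \<union> {u \<in> {0..<n}. \<not> Xg k u}) = card {u \<in> {0..<n}. Xg k u} + card {u \<in> {0..<n}. \<not> Xg k u}"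
      by (rule card_Un_disjoint) auto
    moreover have "{u \<in> {0..<n}. Xg k u} \<union> {u \<in> {0..<n}. \<not> Xg k u} = {0..<n}" by auto
    ultimately show ?thesis by simp
  qed
  have "pmf (map_pmf (Xg k) (pmf_of_set {0..<n})) b = measure (pmf_of_set {0..<n}) (Xg k -` {b})"
    by (rule pmf_map)
  also have "\<dots> = real (card ({0..<n} \<inter> Xg k -` {b})) / real n"
    using ne by (subst measure_pmf_of_set) auto
  also have "\<dots> = pmf (bernoulli_pmf (pk k)) b"
  proof (cases b)
    case True
    have "{0..<n} \<inter> Xg k -` {b} = {u \<in> {0..<n}. Xg k u}" using True by auto
    then show ?thesis using True p by (simp add: pk_def)
  next
    case False
    have "{0..<n} \<inter> Xg k -` {b} = {u \<in> {0..<n}. \<not> Xg k u}" using False by auto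
    moreover have "real (card {u \<in> {0..<n}. \<not> Xg k u}) / real n = 1 - pk k"
      using split assms unfolding pk_def by (simp add: field_simps)
    ultimately show ?thesis using False p by simp
  qed
  finally show "pmf (map_pmf (Xg k) (pmf_of_set {0..<n})) b = pmf (bernoulli_pmf (pk k)) b" .
qed

lemma run_loop:
  assumes "n > 0"
  shows "run n G (loop s k f a) = map_pmf (\<lambda>j. f (a + real j)) (binomial_pmf s (pk k))"
proof (induction s arbitrary: a)
  case 0
  then show ?case using pk_range by (simp add: binomial_pmf_0)
next
  case (Suc s)
  have R: "\<And>x::bool. real (if x then 1 else (0::nat)) = (if x then 1 else 0)" by simp
  define g where "g b = map_pmf (\<lambda>j. f (a + (if b then 1 else 0) + real j)) (binomial_pmf s (pk k))" for b
  have "run n G (loop (Suc s) k f a) =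
        bind_pmf (pmf_of_set {0..<n}) (\<lambda>u. run n G (loop s k f (a + Xv k u (collect G (2 * k + 2) u Map.empty))))"
    by (simp only: loop.simps run.simps run_explore)
  also have "\<dots> = bind_pmf (pmf_of_set {0..<n}) (\<lambda>u. g (Xg k u))"
    by (simp only: Xv_collect Suc.IH g_def Xg_def add.assoc)
  also have "\<dots> = bind_pmf (map_pmf (Xg k) (pmf_of_set {0..<n})) g"
    by (simp add: bind_map_pmf)
  also have "\<dots> = bind_pmf (bernoulli_pmf (pk k)) g" using map_Xg[OF assms] by simp
  also have "\<dots> = map_pmf (\<lambda>j. f (a + real j)) (binomial_pmf (Suc s) (pk k))"
    unfolding binomial_pmf_Suc[OF pk_range] g_def
    by (simp add: map_bind_pmf map_pmf_def bind_assoc_pmf bind_return_pmf add.assoc R)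
  finally show ?case .
qed

end


lemma poly1: fixes m :: real assumes "m \<ge> 2" shows "(m + 1) ^ 5 \<le> m ^ 8"
proof -
  have "m + 1 \<le> 3/2 * m" using assms by simp
  hence "(m + 1) ^ 5 \<le> (3/2 * m) ^ 5" using assms by (intro power_mono) auto
  also have "\<dots> = (3/2) ^ 5 * m ^ 5" by (rule power_mult_distrib)
  also have "\<dots> = 243/32 * m ^ 5" by (simp add: power_divide)
  also have "\<dots> \<le> 8 * m ^ 5" using assms by simp
  also have "\<dots> \<le> m ^ 3 * m ^ 5"
  proof -
    have "(2::real) ^ 3 \<le> m ^ 3" by (rule power_mono) (use assms in auto)
    thus ?thesis using assms by (intro mult_right_mono) auto
  qed
  also have "\<dots> = m ^ 8" by (simp add: power_add[symmetric])
  finally show ?thesis .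
qed

lemma poly2: fixes m :: real assumes "m \<ge> 2" shows "101 * (m + 2) ^ 2 * (m + 1) ^ 5 \<le> 50000 * m ^ 7"
proof -
  have a: "(m + 2) ^ 2 \<le> (2 * m) ^ 2" by (rule power_mono) (use assms in auto)
  have b: "(m + 1) ^ 5 \<le> (3/2 * m) ^ 5" by (rule power_mono) (use assms in auto)
  have "101 * (m + 2) ^ 2 * (m + 1) ^ 5 \<le> 101 * (2 * m) ^ 2 * (3/2 * m) ^ 5"
    using a b assms by (intro mult_mono) auto
  also have "\<dots> = 101 * (2 ^ 2 * m ^ 2) * ((3/2) ^ 5 * m ^ 5)" by (simp only: power_mult_distrib)
  also have "\<dots> = 101 * 4 * (243/32) * (m ^ 2 * m ^ 5)" by (simp add: power_divide)
  also have "\<dots> = 101 * 4 * (243/32) * m ^ 7" by (simp add: power_add[symmetric])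
  also have "\<dots> \<le> 50000 * m ^ 7" using assms by simp
  finally show ?thesis .
qed

lemma powr_shift: fixes D x :: real assumes "D \<ge> 3" "x \<ge> 0" shows "D powr x \<le> (D - 1) powr (8 / 5 * x)"
proof -
  have "D ^ 5 \<le> (D - 1) ^ 8" using poly1[of "D - 1"] assms by simp
  hence "(D ^ 5) powr (x / 5) \<le> ((D - 1) ^ 8) powr (x / 5)"
    using assms by (intro powr_mono2) auto
  moreover have "(D ^ 5) powr (x / 5) = D powr x"
  proof -
    have "D ^ 5 = D powr 5" using assms by simp
    hence "(D ^ 5) powr (x / 5) = D powr (5 * (x / 5))" by (simp only: powr_powr)
    thus ?thesis by simp
  qed
  moreover have "((D - 1) ^ 8) powr (x / 5) = (D - 1) powr (8 / 5 * x)"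
  proof -
    have "(D - 1) ^ 8 = (D - 1) powr 8" using assms by simp
    hence "((D - 1) ^ 8) powr (x / 5) = (D - 1) powr (8 * (x / 5))" by (simp only: powr_powr)
    thus ?thesis by simp
  qed
  ultimately show ?thesis by simp
qed

lemma budget:
  fixes \<delta> \<epsilon> :: real and D k s :: nat
  assumes d: "0 < \<delta>" "\<delta> \<le> 1/2" and e: "0 < \<epsilon>" "\<epsilon> \<le> 1" and D: "D \<ge> 3"
    and k: "real k \<le> 5 * (real D - 1) / (4 * \<epsilon>) + 1"
    and s: "real s \<le> 100 * (real D + 1)^2 * ln (1 / \<delta>) / \<epsilon>^2 + 1"
  shows "real s * Qd (real D) (2 * k + 2) \<le>
         25000 * \<epsilon> powr (-2) * (real D - 1) powr (3 + 4 * real D / \<epsilon>) * ln (1 / \<delta>)"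
proof -
  define L where "L = ln (1 / \<delta>) / \<epsilon>^2"
  define m where "m = real D - 1"
  have m2: "m \<ge> 2" using D by (simp add: m_def)
  have ln2: "ln (1 / \<delta>) \<ge> ln 2" using d by (subst ln_le_cancel_iff) (auto simp: field_simps)
  have ln2': "ln (2::real) \<ge> 1/2"
  proof -
    have "exp (1/2::real) \<le> 2"
    proof -
      have "exp (1/2::real) ^ 2 = exp 1" by (simp add: exp_of_nat_mult[symmetric])
      also have "\<dots> \<le> 4" using exp_le by simp
      finally have "exp (1/2::real) ^ 2 \<le> 2 ^ 2" by simp
      thus ?thesis by (rule power2_le_imp_le) simp
    qed
    thus ?thesis by (subst ln_ge_iff) auto
  qed
  have e2: "\<epsilon>^2 \<le> 1" using e by (simp add: power_le_one)
  have e2p: "\<epsilon>^2 > 0" using e by simp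
  have L1: "L \<ge> 1/2"
  proof -
    have "ln (1/\<delta>) \<ge> 1/2" using ln2 ln2' by simp
    moreover have "ln (1/\<delta>) \<le> ln (1/\<delta>) / \<epsilon>^2"
      using e2 e2p calculation by (simp add: le_divide_eq)
    ultimately show ?thesis unfolding L_def by linarith
  qed
  have sL: "real s \<le> 101 * (real D + 1)^2 * L"
  proof -
    have h4: "4 \<le> real D + 1" using D by simp
    have "(4::real)^2 \<le> (real D + 1)^2" by (rule power_mono[OF h4]) simp
    hence "(real D + 1)^2 \<ge> 2" by simp
    hence "2 * (1/2) \<le> (real D + 1)^2 * L" using L1 by (intro mult_mono) auto
    hence "1 \<le> (real D + 1)^2 * L" by simp
    thus ?thesis using s unfolding L_def by simp
  qed
  have Q: "Qd (real D) (2 * k + 2) \<le> real D ^ (2 * k + 3) / 2"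
  proof -
    have "(real D - 1) * Qd (real D) (2 * k + 2) = real D ^ (2 * k + 3) - 1"
    proof -
      have "(real D - 1) * Qd (real D) (2 * k + 2) = real D ^ Suc (2 * k + 2) - 1" by (rule Qd_closed)
      moreover have "Suc (2 * k + 2) = 2 * k + 3" by simp
      ultimately show ?thesis by metis
    qed
    moreover have "Qd (real D) (2 * k + 2) \<ge> 0" by (rule Qd_nonneg) simp
    moreover have "2 * Qd (real D) (2 * k + 2) \<le> (real D - 1) * Qd (real D) (2 * k + 2)"
      using D calculation(2) by (intro mult_right_mono) auto
    ultimately have "2 * Qd (real D) (2 * k + 2) \<le> real D ^ (2 * k + 3)" by linarith
    thus ?thesis by simp
  qed
  define y where "y = 5 * (real D - 1) / (2 * \<epsilon>)"
  have y0: "y \<ge> 0" using D e by (simp add: y_def)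
  have Dp: "real D ^ (2 * k + 3) \<le> real D ^ 5 * m powr (4 * m / \<epsilon>)"
  proof -
    have "real D ^ (2 * k + 3) = real D powr real (2 * k + 3)" by (rule powr_realpow[symmetric]) (use D in simp)
    also have "\<dots> \<le> real D powr (y + 5)"
    proof (rule powr_mono)
      show "real (2 * k + 3) \<le> y + 5" using k e unfolding y_def by (simp add: field_simps)
      show "1 \<le> real D" using D by simp
    qed
    also have "\<dots> = real D powr y * real D ^ 5" using D by (simp add: powr_add powr_realpow)
    also have "\<dots> \<le> (real D - 1) powr (8 / 5 * y) * real D ^ 5"
      using powr_shift[of "real D" y] D y0 by (intro mult_right_mono) auto
    also have "8 / 5 * y = 4 * m / \<epsilon>" unfolding y_def m_def using e by (simp add: field_simps)
    finally show ?thesis unfolding m_def by (simp add: mult.commute)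
  qed
  have Bp: "m ^ 7 * m powr (4 * m / \<epsilon>) \<le> m powr (3 + 4 * real D / \<epsilon>)"
  proof -
    have "3 + 4 * real D / \<epsilon> = 3 + 4 / \<epsilon> + 4 * m / \<epsilon>" unfolding m_def using e by (simp add: field_simps)
    hence "m powr (3 + 4 * real D / \<epsilon>) = m powr 3 * m powr (4 / \<epsilon>) * m powr (4 * m / \<epsilon>)"
      by (simp add: powr_add)
    moreover have "m powr 4 \<le> m powr (4 / \<epsilon>)" using m2 e by (intro powr_mono) (auto simp: field_simps)
    moreover have "m ^ 7 = m powr 3 * m powr 4"
    proof -
      have "m powr 3 = m ^ 3" "m powr 4 = m ^ 4" using m2 by simp_all
      thus ?thesis by (simp add: power_add[symmetric])
    qed
    moreover have "m powr 3 * m powr 4 * m powr (4 * m / \<epsilon>) \<le> m powr 3 * m powr (4 / \<epsilon>) * m powr (4 * m / \<epsilon>)"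
      using calculation(2) by (intro mult_right_mono mult_left_mono) auto
    ultimately show ?thesis by simp
  qed
  have "real s * Qd (real D) (2 * k + 2) \<le> 101 * (real D + 1)^2 * L * (real D ^ 5 * m powr (4 * m / \<epsilon>) / 2)"
  proof (rule mult_mono)
    show "Qd (real D) (2 * k + 2) \<le> real D ^ 5 * m powr (4 * m / \<epsilon>) / 2" using Q Dp by simp
  qed (use sL Qd_nonneg L1 in auto)
  also have "\<dots> = (101 * (m + 2)^2 * (m + 1)^5) * (m powr (4 * m / \<epsilon>)) * L / 2"
    unfolding m_def by (simp add: algebra_simps)
  also have "\<dots> \<le> (50000 * m ^ 7) * (m powr (4 * m / \<epsilon>)) * L / 2"
    using poly2[OF m2] L1 by (intro divide_right_mono mult_right_mono) auto
  also have "\<dots> = 25000 * L * (m ^ 7 * m powr (4 * m / \<epsilon>))" by simp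
  also have "\<dots> \<le> 25000 * L * m powr (3 + 4 * real D / \<epsilon>)"
    using Bp L1 by (intro mult_left_mono) auto
  also have "\<dots> = 25000 * \<epsilon> powr (-2) * (real D - 1) powr (3 + 4 * real D / \<epsilon>) * ln (1 / \<delta>)"
    unfolding L_def m_def using e by (simp add: powr_minus powr_realpow field_simps)
  finally show ?thesis .
qed


theorem theorem3:
  fixes \<delta> \<epsilon> :: real and \<Delta> :: nat
  assumes "0 < \<delta>" "\<delta> \<le> 1/2" "0 < \<epsilon>" "\<epsilon> \<le> 1" "\<Delta> \<ge> 3"
  shows "\<exists>A :: nat \<Rightarrow> alg. \<forall>n G.
           valid_bigraph n G \<and> no_isolated n G \<and> max_degree_le n G \<Delta> \<longrightarrow>
             legal {} (A n) \<and>
             queries_le n G (A n)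
               (25000 * \<epsilon> powr (-2) * (real \<Delta> - 1) powr (3 + 4 * real \<Delta> / \<epsilon>) * ln (1 / \<delta>)) \<and>
             measure_pmf.prob (run n G (A n))
               {m. \<exists>M. stable_matching n G M \<and> \<bar>m - real (card M)\<bar> \<le> \<epsilon> * real (card M)}
               \<ge> 1 - \<delta>"
proof -
  define k where "k = nat \<lceil>5 * (real \<Delta> - 1) / (4 * \<epsilon>)\<rceil>"
  define s where "s = nat \<lceil>100 * (real \<Delta> + 1)^2 * ln (1 / \<delta>) / \<epsilon>^2\<rceil>"
  define B where "B = 25000 * \<epsilon> powr (-2) * (real \<Delta> - 1) powr (3 + 4 * real \<Delta> / \<epsilon>) * ln (1 / \<delta>)"
  define A where "A = (\<lambda>n. if n = 0 then Output 0 else loop s k (\<lambda>x. real n * x / real s) 0)"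
  have x0: "5 * (real \<Delta> - 1) / (4 * \<epsilon>) > 0" using assms by simp
  have k1: "real k \<ge> 5 * (real \<Delta> - 1) / (4 * \<epsilon>)" unfolding k_def by linarith
  have k2: "real k \<le> 5 * (real \<Delta> - 1) / (4 * \<epsilon>) + 1" unfolding k_def using x0 by linarith
  have kpos: "real k > 0" using k1 x0 by linarith
  have lnd: "ln (1 / \<delta>) > 0" using assms by simp
  have y0: "100 * (real \<Delta> + 1)^2 * ln (1 / \<delta>) / \<epsilon>^2 > 0" using assms lnd by simp
  have s1: "real s \<ge> 100 * (real \<Delta> + 1)^2 * ln (1 / \<delta>) / \<epsilon>^2" unfolding s_def by linarith
  have s2: "real s \<le> 100 * (real \<Delta> + 1)^2 * ln (1 / \<delta>) / \<epsilon>^2 + 1" unfolding s_def using y0 by linarith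
  have spos: "real s > 0" using s1 y0 by linarith
  have bud: "real s * Qd (real \<Delta>) (2 * k + 2) \<le> B"
    unfolding B_def by (rule budget[OF assms(1-5) k2 s2])
  show ?thesis
  proof (intro exI allI impI)
    fix n G assume H: "valid_bigraph n G \<and> no_isolated n G \<and> max_degree_le n G \<Delta>"
    interpret vg n G \<Delta>
      using H by unfold_locales (auto simp: max_degree_le_def)
    define T where "T = \<Delta> * n + 1 + k"
    have T1: "\<Delta> * n + 1 \<le> T" "k \<le> T" by (simp_all add: T_def)
    have st: "stable_matching n G (MT T)" by (rule stable_MT[OF T1(1)])
    define S where "S = card (MT T)"
    define E where "E = {m. \<exists>M. stable_matching n G M \<and> \<bar>m - real (card M)\<bar> \<le> \<epsilon> * real (card M)}"
    have inE: "m \<in> E" if "\<bar>m - real S\<bar> \<le> \<epsilon> * real S" for m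
      using that st unfolding E_def S_def by blast
    have R: "legal {} (A n) \<and> queries_le n G (A n) B \<and> measure_pmf.prob (run n G (A n)) E \<ge> 1 - \<delta>"
    proof (cases "n = 0")
      case True
      have "S = 0" using True unfolding S_def card_MT AC_def by simp
      hence "0 \<in> E" using inE by simp
      thus ?thesis using True assms by (simp add: A_def)
    next
      case False
      hence n0: "n > 0" by simp
      have An: "A n = loop s k (\<lambda>x. real n * x / real s) 0" using False by (simp add: A_def)
      have leg: "legal {} (A n)" unfolding An by (rule legal_loop)
      have qs: "queries_le n G (A n) B"
        unfolding An using queries_loop[OF n0] bud by (rule queries_mono)
      define Sk where "Sk = card (AC k)"
      define p where "p = pk k"
      define t where "t = \<epsilon> / (10 * (real \<Delta> + 1))"
      have tpos: "t > 0" using assms by (simp add: t_def)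
      have pSk: "p = real Sk / real n"
      proof -
        have "{u \<in> {0..<n}. Xg k u} = AC k" by (auto simp: Xg_def AC_def acc_def)
        thus ?thesis unfolding p_def pk_def Sk_def by simp
      qed
      have SAC: "S = card (AC T)" unfolding S_def by (rule card_MT)
      have low: "real n \<le> 2 * (real \<Delta> + 1) * real S"
      proof -
        have "n \<le> 2 * (\<Delta> + 1) * S" using lower_bound[OF st] H unfolding S_def by blast
        hence "real n \<le> real (2 * (\<Delta> + 1) * S)" by (simp only: of_nat_le_iff)
        thus ?thesis by (simp add: algebra_simps)
      qed
      have tr: "S \<le> Sk + card (As k)" using trunc[OF T1(2,1)] SAC Sk_def by simp
      have asb: "k * card (As k) \<le> (\<Delta> - 1) * Sk" using As_bound Sk_def by simp
      have SkS: "Sk \<le> S" using AC_mono[OF T1(2)] SAC Sk_def by simp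
      have err1: "real S - real Sk \<le> 4 * \<epsilon> / 5 * real S"
      proof -
        have a: "real k * real (card (As k)) \<le> (real \<Delta> - 1) * real S"
        proof -
          have "real k * real (card (As k)) \<le> real ((\<Delta> - 1) * Sk)" using asb by (simp only: of_nat_le_iff of_nat_mult[symmetric])
          also have "\<dots> = (real \<Delta> - 1) * real Sk" using assms by (simp add: of_nat_diff)
          also have "\<dots> \<le> (real \<Delta> - 1) * real S" using SkS assms by (intro mult_left_mono) auto
          finally show ?thesis .
        qed
        have b: "real S - real Sk \<le> real (card (As k))" using tr by simp
        have c: "real \<Delta> - 1 \<le> 4 * \<epsilon> / 5 * real k" using k1 assms by (simp add: field_simps)
        have "real k * (real S - real Sk) \<le> real k * real (card (As k))"
          using b kpos by (intro mult_left_mono) auto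
        also have "\<dots> \<le> (real \<Delta> - 1) * real S" by (rule a)
        also have "\<dots> \<le> 4 * \<epsilon> / 5 * real k * real S" using c by (intro mult_right_mono) auto
        finally have "real k * (real S - real Sk) \<le> real k * (4 * \<epsilon> / 5 * real S)" by (simp add: algebra_simps)
        thus ?thesis using kpos by simp
      qed
      have good: "real n * (0 + real j) / real s \<in> E" if j: "\<bar>real j / real s - p\<bar> < t" for j
      proof -
        have "\<bar>real n * (0 + real j) / real s - real Sk\<bar> = real n * \<bar>real j / real s - p\<bar>"
        proof -
          have "real n * (real j / real s - p) = real n * (0 + real j) / real s - real Sk"
            using n0 pSk by (simp add: field_simps)
          hence "\<bar>real n * (0 + real j) / real s - real Sk\<bar> = \<bar>real n * (real j / real s - p)\<bar>" by simp
          also have "\<dots> = real n * \<bar>real j / real s - p\<bar>" by (simp add: abs_mult)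
          finally show ?thesis .
        qed
        also have "\<dots> \<le> real n * t" using j by (intro mult_left_mono) auto
        also have "\<dots> \<le> 2 * (real \<Delta> + 1) * real S * t" using low tpos by (intro mult_right_mono) auto
        also have "\<dots> = \<epsilon> / 5 * real S" unfolding t_def by (simp add: field_simps)
        finally have a: "\<bar>real n * (0 + real j) / real s - real Sk\<bar> \<le> \<epsilon> / 5 * real S" .
        define m where "m = real n * (0 + real j) / real s"
        have a1: "m - real Sk \<le> \<epsilon> / 5 * real S" "real Sk - m \<le> \<epsilon> / 5 * real S"
          using a unfolding m_def abs_le_iff by linarith+
        have b: "real Sk \<le> real S" using SkS by simp
        have c: "0 \<le> \<epsilon> * real S" using assms by simp
        have "\<bar>m - real S\<bar> \<le> \<epsilon> * real S"
          unfolding abs_le_iff using a1 b c err1 by linarith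
        hence "\<bar>real n * (0 + real j) / real s - real S\<bar> \<le> \<epsilon> * real S" unfolding m_def .
        thus ?thesis by (rule inE)
      qed
      have bd: "binomial_distribution p" unfolding p_def using pk_range by unfold_locales
      have tail: "measure_pmf.prob (binomial_pmf s p) {x. \<bar>real x / real s - p\<bar> \<ge> t} \<le> 2 * exp (-2 * real s * t^2)"
      proof -
        have "measure_pmf.prob (binomial_pmf s p) {x. t \<le> \<bar>real x / real s - p\<bar>}
              \<le> 2 * exp (real_of_int (- 2 * int s) * t\<^sup>2)"
          using binomial_distribution.prob_abs_ge'[OF bd, where n=s and \<epsilon>=t] spos tpos by simp
        moreover have "real_of_int (- 2 * int s) * t\<^sup>2 = -2 * real s * t^2" by simp
        ultimately show ?thesis by simp
      qed
      have expb: "2 * exp (-2 * real s * t^2) \<le> \<delta>"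
      proof -
        have "real s * t^2 \<ge> ln (1 / \<delta>)"
        proof -
          have "real s * t^2 \<ge> 100 * (real \<Delta> + 1)^2 * ln (1 / \<delta>) / \<epsilon>^2 * t^2"
            using s1 by (intro mult_right_mono) auto
          also have "100 * (real \<Delta> + 1)^2 * ln (1 / \<delta>) / \<epsilon>^2 * t^2 = ln (1 / \<delta>)"
          proof -
            define a where "a = (real \<Delta> + 1)^2"
            have a0: "a > 0" unfolding a_def using assms by simp
            have "t^2 = \<epsilon>^2 / (100 * a)" unfolding t_def a_def by (simp add: power_divide power2_eq_square algebra_simps)
            hence "100 * (real \<Delta> + 1)^2 * ln (1 / \<delta>) / \<epsilon>^2 * t^2 = 100 * a * ln (1 / \<delta>) / \<epsilon>^2 * (\<epsilon>^2 / (100 * a))"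
              unfolding a_def by simp
            also have "\<dots> = ln (1 / \<delta>)" using a0 assms by (simp add: field_simps)
            finally show ?thesis .
          qed
          finally show ?thesis .
        qed
        hence "-2 * real s * t^2 \<le> 2 * ln \<delta>" using assms by (simp add: ln_div)
        hence "exp (-2 * real s * t^2) \<le> exp (2 * ln \<delta>)" by simp
        also have "exp (2 * ln \<delta>) = \<delta>^2"
        proof -
          have "exp (2 * ln \<delta>) = exp (ln \<delta>) * exp (ln \<delta>)" by (simp only: mult_2 exp_add)
          also have "\<dots> = \<delta> * \<delta>" using assms(1) by (simp only: exp_ln)
          finally show ?thesis by (simp only: power2_eq_square)
        qed
        finally have "2 * exp (-2 * real s * t^2) \<le> 2 * \<delta>^2" by simp
        also have "\<dots> \<le> \<delta>"
        proof -
          have "\<delta> * \<delta> \<le> \<delta> * (1/2)" using assms(1,2) by (intro mult_left_mono) auto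
          thus ?thesis by (simp add: power2_eq_square)
        qed
        finally show ?thesis .
      qed
      have "run n G (A n) = map_pmf (\<lambda>j. real n * (0 + real j) / real s) (binomial_pmf s p)"
        unfolding An p_def by (rule run_loop[OF n0])
      hence "measure_pmf.prob (run n G (A n)) E =
             measure_pmf.prob (binomial_pmf s p) ((\<lambda>j. real n * (0 + real j) / real s) -` E)" by simp
      also have "\<dots> \<ge> measure_pmf.prob (binomial_pmf s p) (UNIV - {x. \<bar>real x / real s - p\<bar> \<ge> t})"
        using good by (intro measure_pmf.finite_measure_mono) (auto simp: not_le)
      finally have X: "measure_pmf.prob (run n G (A n)) E \<ge>
                    measure_pmf.prob (binomial_pmf s p) (UNIV - {x. \<bar>real x / real s - p\<bar> \<ge> t})" .
      have "measure_pmf.prob (binomial_pmf s p) (space (measure_pmf (binomial_pmf s p)) - {x. \<bar>real x / real s - p\<bar> \<ge> t})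
              = 1 - measure_pmf.prob (binomial_pmf s p) {x. \<bar>real x / real s - p\<bar> \<ge> t}"
        by (rule measure_pmf.prob_compl) simp
      hence "measure_pmf.prob (run n G (A n)) E \<ge>
                    1 - measure_pmf.prob (binomial_pmf s p) {x. \<bar>real x / real s - p\<bar> \<ge> t}"
        using X by simp
      hence "measure_pmf.prob (run n G (A n)) E \<ge> 1 - \<delta>" using tail expb by linarith
      thus ?thesis using leg qs by blast
    qed
    from R show "legal {} (A n) \<and>
             queries_le n G (A n)
               (25000 * \<epsilon> powr (-2) * (real \<Delta> - 1) powr (3 + 4 * real \<Delta> / \<epsilon>) * ln (1 / \<delta>)) \<and>
             measure_pmf.prob (run n G (A n))
               {m. \<exists>M. stable_matching n G M \<and> \<bar>m - real (card M)\<bar> \<le> \<epsilon> * real (card M)}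
               \<ge> 1 - \<delta>" unfolding B_def E_def .
  qed
qed


end
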